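(* Let $n\ge 1$ and $a\ge 2$ be integers and $r>0$. For $j\in\mathbb Z$ let $P_j$ be the point $\bigl(r\cos(2\pi j/n),\, r\sin(2\pi j/n)\bigr)$ on the circle of radius $r$ centered at the origin (so $P_j$ depends only on $j \bmod n$, and $P_0,\dots,P_{n-1}$ are $n$ equally spaced points on the circle). Then \[\sum_{k=0}^{n-1} |P_k P_{ak}| \;=\; 2rg\cot\left(\frac{\pi g}{2n}\right),\] where $|P_kP_{ak}|$ denotes the Euclidean distance between $P_k$ and $P_{ak}$, and $g=\gcd(a-1,n)$.
   Context: The sum counts, for each $k\in\{0,1,\dots,n-1\}$, the length of the segment joining point $k$ to point $ak \bmod n$; a segment may be counted twice (once from each endpoint) and degenerate segments (when $ak\equiv k \bmod n$) have length $0$. *)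

theory Defs
  imports "HOL-Analysis.Analysis"
begin

text \<open>The point P_j on the circle of radius r, as an element of the Euclidean plane
  real \<times> real (the product metric there is the Euclidean distance).\<close>
definition circ_pt :: "nat \<Rightarrow> real \<Rightarrow> int \<Rightarrow> real \<times> real" where
  "circ_pt n r j = (r * cos (2 * pi * real_of_int j / real n), r * sin (2 * pi * real_of_int j / real n))"

end

theory Submission
  imports Defs
begin

lemma dist_circ:
  assumes "r > 0"
  shows "dist (circ_pt n r j) (circ_pt n r l) = 2 * r * \<bar>sin (pi * real_of_int (l - j) / real n)\<bar>"
proof -
  define x where "x = 2 * pi * real_of_int j / real n"
  define y where "y = 2 * pi * real_of_int l / real n"
  have hw: "pi * real_of_int (l - j) / real n = (y - x) / 2"
    unfolding x_def y_def by (cases "n = 0") (simp_all add: field_simps)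
  have "(r * cos x - r * cos y)^2 + (r * sin x - r * sin y)^2 = r^2 * ((sin x ^2 + cos x ^2) + (sin y ^2 + cos y^2)) - 2 * r^2 * (cos y * cos x + sin y * sin x)"
    by algebra
  also have "\<dots> = r^2 * (2 - 2 * cos (y - x))"
    by (simp only: sin_cos_squared_add cos_diff) (simp add: algebra_simps)
  also have "cos (y - x) = 1 - 2 * sin ((y-x)/2) ^ 2"
  proof -
    have "2 * ((y-x)/2) = y - x" by simp
    then show ?thesis using cos_double_sin[of "(y-x)/2"] by metis
  qed
  finally have e: "(r * cos x - r * cos y)^2 + (r * sin x - r * sin y)^2 = (2 * r * sin ((y-x)/2))^2"
    by (simp add: power2_eq_square algebra_simps)
  have "dist (circ_pt n r j) (circ_pt n r l) = sqrt ((r * cos x - r * cos y)^2 + (r * sin x - r * sin y)^2)"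
    unfolding circ_pt_def x_def y_def by (simp add: dist_Pair_Pair dist_real_def)
  also have "\<dots> = \<bar>2 * r * sin ((y-x)/2)\<bar>" using e by simp
  finally have "dist (circ_pt n r j) (circ_pt n r l) = \<bar>2 * r * sin ((y-x)/2)\<bar>" .
  then show ?thesis using assms unfolding hw[symmetric] by (simp add: abs_mult)
qed

lemma tele: "2 * sin (x/2) * (\<Sum>s<N. sin (real s * x)) = cos (x/2) - cos ((real N - 1/2) * x)"
proof (induction N)
  case 0 then show ?case by simp
next
  case (Suc N)
  have "2 * sin (x/2) * sin (real N * x) = cos ((real N - 1/2) * x) - cos ((real N + 1/2) * x)"
  proof -
    have "cos (x/2 - real N * x) = cos (real N * x - x/2)" by (metis cos_minus minus_diff_eq)
    then show ?thesis by (simp add: sin_times_sin algebra_simps) (simp add: field_simps)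
  qed
  then show ?case using Suc by (simp add: algebra_simps)
qed

lemma sinsum:
  assumes "m \<ge> (1::nat)"
  shows "(\<Sum>s<m. sin (pi * real s / real m)) = cot (pi / (2 * real m))"
proof -
  define x where "x = pi / real m"
  have pos: "sin (x/2) > 0" unfolding x_def using assms
    by (intro sin_gt_zero) (auto simp: field_simps)
  have "cos ((real m - 1/2) * x) = cos (pi - x/2)" unfolding x_def using assms
    by (simp add: field_simps)
  also have "\<dots> = - cos (x/2)" by simp
  finally have c: "cos ((real m - 1/2) * x) = - cos (x/2)" .
  have "2 * sin (x/2) * (\<Sum>s<m. sin (real s * x)) = 2 * cos (x/2)" using tele[of x m] c by simp
  hence "(\<Sum>s<m. sin (real s * x)) = cos (x/2) / sin (x/2)" using pos by (simp add: field_simps)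
  moreover have "x / 2 = pi / (2 * real m)" unfolding x_def by simp
  ultimately show ?thesis unfolding x_def cot_def tan_def by (simp add: mult.commute)
qed

lemma sin_mod:
  assumes "m > (0::nat)"
  shows "\<bar>sin (pi * real t / real m)\<bar> = \<bar>sin (pi * real (t mod m) / real m)\<bar>"
proof -
  have "real t = real (t mod m) + real m * real (t div m)"
    using mod_mult_div_eq[of t m] by (metis of_nat_add of_nat_mult add.commute)
  hence "pi * real t / real m = pi * real (t mod m) / real m + real (t div m) * pi"
    using assms by (simp add: field_simps)
  thus ?thesis by (simp add: sin_add abs_mult)
qed

lemma blocks:
  fixes G :: "nat \<Rightarrow> real"
  assumes "\<And>k. G k = G (k mod m)"
  shows "(\<Sum>k<g*m. G k) = real g * (\<Sum>k<m. G k)"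
proof (induction g)
  case 0 then show ?case by simp
next
  case (Suc g)
  have "(\<Sum>k<Suc g*m. G k) = (\<Sum>k\<in>{0..<g*m}. G k) + (\<Sum>k\<in>{g*m..<m+g*m}. G k)"
    by (simp add: sum.atLeastLessThan_concat atLeast0LessThan[symmetric])
  also have "(\<Sum>k\<in>{g*m..<m+g*m}. G k) = (\<Sum>k\<in>{0..<m}. G (k + g*m))"
    using sum.shift_bounds_nat_ivl[of G 0 "g*m" m] by simp
  also have "\<dots> = (\<Sum>k\<in>{0..<m}. G k)"
    by (intro sum.cong refl) (metis assms mod_mult_self1)
  finally show ?case using Suc by (simp add: atLeast0LessThan algebra_simps)
qed

lemma reidx:
  fixes b m :: nat
  assumes "coprime b m"
  shows "(\<Sum>k<m. \<bar>sin (pi * real ((b*k) mod m) / real m)\<bar>) = (\<Sum>s<m. \<bar>sin (pi * real s / real m)\<bar>)"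
proof -
  define h where "h k = (b*k) mod m" for k
  have one: "x = y" if "x < m" "y \<le> x" "h x = h y" for x y
  proof -
    have "m dvd b*x - b*y" using that mod_eq_dvd_iff_nat[of "b*y" "b*x" m] unfolding h_def by simp
    hence "m dvd b*(x - y)" by (simp add: diff_mult_distrib2)
    hence "m dvd x - y" using assms coprime_dvd_mult_right_iff[of m b "x-y"] by (simp add: coprime_commute)
    moreover have "x - y < m" using that by simp
    ultimately have "x - y = 0" using dvd_imp_le by (cases "x - y = 0") auto
    thus ?thesis using that by simp
  qed
  have inj: "inj_on h {..<m}"
  proof
    fix x y assume "x \<in> {..<m}" "y \<in> {..<m}" "h x = h y"
    thus "x = y" using one[of x y] one[of y x] by (cases "y \<le> x") auto
  qed
  have sub: "h ` {..<m} \<subseteq> {..<m}" unfolding h_def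
    by (auto intro: mod_less_divisor)
  have "bij_betw h {..<m} {..<m}" unfolding bij_betw_def using inj endo_inj_surj[OF _ sub inj] by simp
  from sum.reindex_bij_betw[OF this, of "\<lambda>s. \<bar>sin (pi * real s / real m)\<bar>"]
  show ?thesis unfolding h_def by simp
qed


theorem theorem1:
  fixes n :: nat and a :: int and r :: real
  assumes "n \<ge> 1" and "a \<ge> 2" and "r > 0"
  shows "(\<Sum>k<n. dist (circ_pt n r (int k)) (circ_pt n r (a * int k)))
         = 2 * r * real_of_int (gcd (a - 1) (int n)) * cot (pi * real_of_int (gcd (a - 1) (int n)) / (2 * real n))"
proof -
  define b where "b = nat (a - 1)"
  have ab: "a - 1 = int b" unfolding b_def using assms by simp
  define g where "g = gcd b n"
  have gint: "gcd (a - 1) (int n) = int g" unfolding g_def ab by (simp add: gcd_int_int_eq)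
  have gpos: "g > 0" unfolding g_def using assms by simp
  define m where "m = n div g"
  define c where "c = b div g"
  have nm: "n = g * m" unfolding m_def g_def by simp
  have bc: "b = g * c" unfolding c_def g_def by simp
  have mpos: "m \<ge> 1" using nm assms by (cases m) auto
  have cop: "coprime c m"
  proof -
    have "gcd b n = g * gcd c m" using bc nm by (simp add: gcd_mult_left)
    hence "gcd c m = 1" using gpos assms(1) unfolding g_def by simp
    thus ?thesis by (simp add: coprime_iff_gcd_eq_1)
  qed
  define G where "G k = \<bar>sin (pi * real ((c*k) mod m) / real m)\<bar>" for k
  have tm: "dist (circ_pt n r (int k)) (circ_pt n r (a * int k)) = 2 * r * G k" for k
  proof -
    have "real_of_int (a * int k - int k) = real (g * (c * k))"
      using ab bc by (simp add: algebra_simps)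
    hence "pi * real_of_int (a * int k - int k) / real n = pi * real (c*k) / real m"
      using nm gpos by (simp add: field_simps)
    thus ?thesis unfolding G_def using dist_circ[OF assms(3)] sin_mod[of m "c*k"] mpos by simp
  qed
  have Gp: "G k = G (k mod m)" for k unfolding G_def by (simp add: mod_mult_right_eq)
  have "(\<Sum>k<n. dist (circ_pt n r (int k)) (circ_pt n r (a * int k))) = 2 * r * (\<Sum>k<g*m. G k)"
    using tm nm by (simp add: sum_distrib_left)
  also have "(\<Sum>k<g*m. G k) = real g * (\<Sum>k<m. G k)" using blocks[of G m g] Gp by blast
  also have "(\<Sum>k<m. G k) = (\<Sum>s<m. \<bar>sin (pi * real s / real m)\<bar>)" unfolding G_def using reidx[OF cop] .
  also have "\<dots> = (\<Sum>s<m. sin (pi * real s / real m))"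
  proof (intro sum.cong refl)
    fix s assume "s \<in> {..<m}"
    hence "pi * real s / real m \<le> pi" using mpos by (simp add: field_simps)
    thus "\<bar>sin (pi * real s / real m)\<bar> = sin (pi * real s / real m)"
      by (intro abs_of_nonneg sin_ge_zero) auto
  qed
  also have "\<dots> = cot (pi / (2 * real m))" using sinsum mpos by blast
  also have "pi / (2 * real m) = pi * real g / (2 * real n)" using nm gpos by (simp add: field_simps)
  finally show ?thesis unfolding gint by (simp add: algebra_simps)
qed

end
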